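(* Let $\Phi$ be a dictionary with coherence $\mu$, let $m\ge1$ with $m<\tfrac12(\mu^{-1}+1)$, and let $y=\Phi x^*$ be an $m$-sparse signal with $\|x^*\|_0\le m$ and support $\Lambda_{opt}$. Let $\beta>0$ with $\|x^*\|_1\le\beta$. Then the iterates $x_k$ of the Frank-Wolfe algorithm for Problem (P$_\beta$) converge to $x^*$ as $k\to\infty$.
   Context: A dictionary is a matrix $\Phi=[\varphi_1,\dots,\varphi_n]\in\mathbb{R}^{d\times n}$ whose columns (atoms) satisfy $\|\varphi_i\|_2=1$. Its coherence is $\mu=\max_{j\neq k}|\langle\varphi_j,\varphi_k\rangle|$. A signal $y\in\mathbb{R}^d$ is $m$-sparse if $y=\Phi x^*$ for some $x^*\in\mathbb{R}^n$ with at most $m$ nonzero entries; when $m<\tfrac12(\mu^{-1}+1)$ such an $x^*$ is unique, and its support is denoted $\Lambda_{opt}$. Problem (P$_\beta$): minimize $f(x)=\tfrac12\|y-\Phi x\|_2^2$ over $B_1(\beta)=\{x\in\mathbb{R}^n:\|x\|_1\le\beta\}$. Frank-Wolfe algorithm for (P$_\beta$): set $x_0=0$. For $k=0,1,2,\dots$: let $r_k=y-\Phi x_k$; choose $i_k\in\arg\max_{i}|\langle\varphi_i,r_k\rangle|$ (any maximizer); set $s_k=\operatorname{sign}(\langle\varphi_{i_k},r_k\rangle)\,\beta\, e_{i_k}$ ($e_i$ the canonical basis vectors, $\operatorname{sign}(0)\in\{\pm1\}$ arbitrary); choose $\gamma_k\in\arg\min_{\gamma\in[0,1]}\|y-\Phi(x_k+\gamma(s_k-x_k))\|_2^2$;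 set $x_{k+1}=x_k+\gamma_k(s_k-x_k)$. *)

theory Defs
  imports "HOL-Analysis.Analysis"
begin

text \<open>A dictionary is a d x n real matrix (type real^'n^'d) whose columns are the atoms.\<close>

definition unit_columns :: "real^'n^'d \<Rightarrow> bool" where
  "unit_columns Phi \<longleftrightarrow> (\<forall>i. norm (column i Phi) = 1)"

text \<open>Coherence: maximum of absolute inner products of distinct atoms
  (convention: 0 when there is only one atom, i.e. no pair exists).\<close>
definition coherence :: "real^'n^'d \<Rightarrow> real" where
  "coherence Phi = Max ({\<bar>inner (column j Phi) (column k Phi)\<bar> | j k. j \<noteq> k} \<union> {0})"

definition l1norm :: "real^'n \<Rightarrow> real" where
  "l1norm x = (\<Sum>i\<in>UNIV. \<bar>x $ i\<bar>)"

definition supp :: "real^'n \<Rightarrow> 'n set" where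
  "supp x = {i. x $ i \<noteq> 0}"

definition fw_obj :: "real^'n^'d \<Rightarrow> real^'d \<Rightarrow> real^'n \<Rightarrow> real" where
  "fw_obj Phi y x = (1/2) * (norm (y - Phi *v x))\<^sup>2"

text \<open>One Frank-Wolfe step from xk to xk' (with any admissible choices of
  maximizing index, sign of zero, and exact line-search minimizer).\<close>
definition fw_step :: "real^'n^'d \<Rightarrow> real^'d \<Rightarrow> real \<Rightarrow> real^'n \<Rightarrow> real^'n \<Rightarrow> bool" where
  "fw_step Phi y beta xk xk' \<longleftrightarrow>
     (\<exists>i \<sigma> \<gamma> s.
        (let r = y - Phi *v xk in
          (\<forall>j. \<bar>inner (column j Phi) r\<bar> \<le> \<bar>inner (column i Phi) r\<bar>) \<and>
          \<sigma> \<in> {-1, 1} \<and>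
          (inner (column i Phi) r > 0 \<longrightarrow> \<sigma> = 1) \<and>
          (inner (column i Phi) r < 0 \<longrightarrow> \<sigma> = -1) \<and>
          s = (\<sigma> * beta) *\<^sub>R axis i 1 \<and>
          \<gamma> \<in> {0..1} \<and>
          (\<forall>g\<in>{0..1}. (norm (y - Phi *v (xk + \<gamma> *\<^sub>R (s - xk))))\<^sup>2
                        \<le> (norm (y - Phi *v (xk + g *\<^sub>R (s - xk))))\<^sup>2) \<and>
          xk' = xk + \<gamma> *\<^sub>R (s - xk)))"

definition fw_iterates :: "real^'n^'d \<Rightarrow> real^'d \<Rightarrow> real \<Rightarrow> (nat \<Rightarrow> real^'n) \<Rightarrow> bool" where
  "fw_iterates Phi y beta xs \<longleftrightarrow> xs 0 = 0 \<and> (\<forall>k. fw_step Phi y beta (xs k) (xs (Suc k)))"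

end

theory Submission
  imports Defs
begin

lemma coh_ge0: "0 \<le> coherence (Phi::real^'n^'d)"
proof -
  let ?A = "{\<bar>inner (column j Phi) (column k Phi)\<bar> | j k. j \<noteq> k} \<union> {0}"
  have "?A \<subseteq> (\<lambda>(j,k). \<bar>inner (column j Phi) (column k Phi)\<bar>) ` UNIV \<union> {0}" by auto
  hence fin: "finite ?A" by (rule finite_subset) simp
  show ?thesis unfolding coherence_def by (rule Max_ge[OF fin]) simp
qed

lemma coh_bound:
  assumes "a \<noteq> b"
  shows "\<bar>inner (column a Phi) (column b Phi)\<bar> \<le> coherence (Phi::real^'n^'d)"
proof -
  let ?A = "{\<bar>inner (column j Phi) (column k Phi)\<bar> | j k. j \<noteq> k} \<union> {0}"
  have "?A \<subseteq> (\<lambda>(j,k). \<bar>inner (column j Phi) (column k Phi)\<bar>) ` UNIV \<union> {0}" by auto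
  hence fin: "finite ?A" by (rule finite_subset) simp
  show ?thesis unfolding coherence_def by (rule Max_ge[OF fin]) (use assms in blast)
qed

lemma expand:
  "inner (column a Phi) ((Phi::real^'n^'d) *v z) = (\<Sum>j\<in>UNIV. z$j * inner (column a Phi) (column j Phi))"
  by (simp add: matrix_mult_sum scalar_mult_eq_scaleR inner_sum_right)

lemma unit_inner: "unit_columns Phi \<Longrightarrow> inner (column a Phi) (column a Phi) = 1"
  unfolding unit_columns_def by (metis power2_norm_eq_inner power_one)

lemma supp_zero: "supp z \<subseteq> S \<Longrightarrow> j \<notin> S \<Longrightarrow> z$j = 0"
  unfolding supp_def by auto

lemma lower:
  fixes Phi :: "real^'n^'d"
  assumes u: "unit_columns Phi" and s: "supp z \<subseteq> S" and mx: "\<forall>j. \<bar>z$j\<bar> \<le> \<bar>z$j0\<bar>" and j0: "j0 \<in> S"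
  shows "\<bar>z$j0\<bar> * (1 - (real (card S) - 1) * coherence Phi) \<le> \<bar>inner (column j0 Phi) (Phi *v z)\<bar>"
proof -
  let ?mu = "coherence Phi"
  let ?f = "\<lambda>j. z$j * inner (column j0 Phi) (column j Phi)"
  have fS: "finite S" by simp
  have "inner (column j0 Phi) (Phi *v z) = sum ?f UNIV" by (rule expand)
  also have "\<dots> = sum ?f S"
    by (rule sum.mono_neutral_right) (auto dest: supp_zero[OF s])
  also have "\<dots> = ?f j0 + sum ?f (S - {j0})" using j0 by (simp add: sum.remove)
  also have "?f j0 = z$j0" using unit_inner[OF u] by simp
  finally have eq: "inner (column j0 Phi) (Phi *v z) = z$j0 + sum ?f (S - {j0})" .
  have "\<bar>sum ?f (S - {j0})\<bar> \<le> sum (\<lambda>j. \<bar>?f j\<bar>) (S - {j0})" by (rule sum_abs)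
  also have "\<dots> \<le> sum (\<lambda>j. \<bar>z$j0\<bar> * ?mu) (S - {j0})"
  proof (rule sum_mono)
    fix j assume "j \<in> S - {j0}"
    hence "j0 \<noteq> j" by auto
    from coh_bound[OF this, of Phi] mx show "\<bar>?f j\<bar> \<le> \<bar>z$j0\<bar> * ?mu"
      by (simp add: abs_mult mult_mono)
  qed
  also have "\<dots> = (real (card S) - 1) * (\<bar>z$j0\<bar> * ?mu)"
  proof -
    have c1: "card S \<ge> 1" using j0 fS by (metis One_nat_def Suc_leI card_gt_0_iff empty_iff)
    have "card (S - {j0}) = card S - 1" using j0 fS by simp
    hence "real (card (S - {j0})) = real (card S) - 1" using c1 by (simp add: of_nat_diff)
    thus ?thesis by simp
  qed
  finally have "\<bar>sum ?f (S - {j0})\<bar> \<le> (real (card S) - 1) * (\<bar>z$j0\<bar> * ?mu)" .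
  thus ?thesis using eq by (simp add: algebra_simps)
qed

lemma upper:
  fixes Phi :: "real^'n^'d"
  assumes s: "supp z \<subseteq> S" and mx: "\<forall>j. \<bar>z$j\<bar> \<le> \<bar>z$j0\<bar>" and i: "i \<notin> S"
  shows "\<bar>inner (column i Phi) (Phi *v z)\<bar> \<le> real (card S) * (\<bar>z$j0\<bar> * coherence Phi)"
proof -
  let ?f = "\<lambda>j. z$j * inner (column i Phi) (column j Phi)"
  have "inner (column i Phi) (Phi *v z) = sum ?f UNIV" by (rule expand)
  also have "\<dots> = sum ?f S"
    by (rule sum.mono_neutral_right) (auto dest: supp_zero[OF s])
  finally have "\<bar>inner (column i Phi) (Phi *v z)\<bar> \<le> sum (\<lambda>j. \<bar>?f j\<bar>) S" by (simp add: sum_abs)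
  also have "\<dots> \<le> sum (\<lambda>j. \<bar>z$j0\<bar> * coherence Phi) S"
  proof (rule sum_mono)
    fix j assume "j \<in> S"
    hence "i \<noteq> j" using i by auto
    from coh_bound[OF this, of Phi] mx show "\<bar>?f j\<bar> \<le> \<bar>z$j0\<bar> * coherence Phi"
      by (simp add: abs_mult mult_mono)
  qed
  finally show ?thesis by simp
qed

lemma exmax: "\<exists>j0. \<forall>j. \<bar>(z::real^'n)$j\<bar> \<le> \<bar>z$j0\<bar>"
proof -
  have "Max (range (\<lambda>j. \<bar>z$j\<bar>)) \<in> range (\<lambda>j. \<bar>z$j\<bar>)" by (rule Max_in) auto
  then obtain j0 where e: "\<bar>z$j0\<bar> = Max (range (\<lambda>j. \<bar>z$j\<bar>))" by (metis (no_types, lifting) imageE)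
  have "\<forall>j. \<bar>z$j\<bar> \<le> \<bar>z$j0\<bar>" unfolding e by (auto intro: Max_ge)
  thus ?thesis by blast
qed


lemma unpack:
  assumes "fw_step Phi y beta x x'"
  obtains i \<sigma> \<gamma> s where
    "\<forall>j. \<bar>inner (column j Phi) (y - Phi *v x)\<bar> \<le> \<bar>inner (column i Phi) (y - Phi *v x)\<bar>"
    "\<sigma> \<in> {-1, 1}"
    "inner (column i Phi) (y - Phi *v x) > 0 \<longrightarrow> \<sigma> = 1"
    "inner (column i Phi) (y - Phi *v x) < 0 \<longrightarrow> \<sigma> = -1"
    "s = (\<sigma> * beta) *\<^sub>R axis i 1"
    "\<gamma> \<in> {0..1}"
    "\<forall>g\<in>{0..1}. (norm (y - Phi *v (x + \<gamma> *\<^sub>R (s - x))))\<^sup>2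
                        \<le> (norm (y - Phi *v (x + g *\<^sub>R (s - x))))\<^sup>2"
    "x' = x + \<gamma> *\<^sub>R (s - x)"
  using assms unfolding fw_step_def Let_def by blast

lemma supp_step:
  fixes Phi :: "real^'n^'d"
  assumes u: "unit_columns Phi"
    and h1: "(2 * real (card L) - 1) * coherence Phi < 1"
    and h2: "real (card L) * coherence Phi < 1"
    and y: "y = Phi *v xstar" and sx: "supp xstar \<subseteq> L" and sk: "supp x \<subseteq> L"
    and b: "beta > 0" and st: "fw_step Phi y beta x x'"
  shows "supp x' \<subseteq> L"
proof -
  let ?mu = "coherence Phi"
  have mu0: "0 \<le> ?mu" by (rule coh_ge0)
  obtain i \<sigma> \<gamma> s where mx: "\<forall>j. \<bar>inner (column j Phi) (y - Phi *v x)\<bar> \<le> \<bar>inner (column i Phi) (y - Phi *v x)\<bar>"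
    and sg: "\<sigma> \<in> {-1, 1}" 
    and sg1: "inner (column i Phi) (y - Phi *v x) > 0 \<longrightarrow> \<sigma> = 1"
    and sg2: "inner (column i Phi) (y - Phi *v x) < 0 \<longrightarrow> \<sigma> = -1"
    and sdef: "s = (\<sigma> * beta) *\<^sub>R axis i 1" and ga: "\<gamma> \<in> {0..1}"
    and ls: "\<forall>g\<in>{0..1}. (norm (y - Phi *v (x + \<gamma> *\<^sub>R (s - x))))\<^sup>2
                        \<le> (norm (y - Phi *v (x + g *\<^sub>R (s - x))))\<^sup>2"
    and x': "x' = x + \<gamma> *\<^sub>R (s - x)"
    by (rule unpack[OF st])
  have key: "i \<in> L \<or> \<gamma> = 0"
  proof (rule ccontr)
    assume "\<not> (i \<in> L \<or> \<gamma> = 0)"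
    hence iL: "i \<notin> L" and g0: "\<gamma> \<noteq> 0" by auto
    define z where "z = xstar - x"
    have sz: "supp z \<subseteq> L"
    proof
      fix j assume "j \<in> supp z"
      hence "xstar$j \<noteq> 0 \<or> x$j \<noteq> 0" unfolding supp_def z_def by auto
      thus "j \<in> L" using sx sk unfolding supp_def by auto
    qed
    have r: "y - Phi *v x = Phi *v z" unfolding z_def y by (simp add: matrix_vector_mult_diff_distrib)
    obtain j0 where j0: "\<forall>j. \<bar>z$j\<bar> \<le> \<bar>z$j0\<bar>" using exmax by blast
    show False
    proof (cases "z$j0 = 0")
      case False
      hence j0L: "j0 \<in> L" using supp_zero[OF sz] by blast
      have "\<bar>z$j0\<bar> * (1 - (real (card L) - 1) * ?mu) \<le> \<bar>inner (column j0 Phi) (Phi *v z)\<bar>"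
        by (rule lower[OF u sz j0 j0L])
      also have "\<dots> \<le> \<bar>inner (column i Phi) (Phi *v z)\<bar>" using mx r by metis
      also have "\<dots> \<le> real (card L) * (\<bar>z$j0\<bar> * ?mu)" by (rule upper[OF sz j0 iL])
      finally have "\<bar>z$j0\<bar> * (1 - (real (card L) - 1) * ?mu) \<le> \<bar>z$j0\<bar> * (real (card L) * ?mu)"
        by (simp add: algebra_simps)
      hence "1 - (real (card L) - 1) * ?mu \<le> real (card L) * ?mu" using False by simp
      thus False using h1 by (simp add: algebra_simps)
    next
      case True
      hence "z = 0" using j0 by (simp add: vec_eq_iff)
      hence r0: "y - Phi *v x = 0" using r by simp
      define v where "v = s - x"
      have "y - Phi *v (x + \<gamma> *\<^sub>R (s - x)) = (y - Phi *v x) - \<gamma> *\<^sub>R (Phi *v v)"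
        unfolding v_def by (simp add: matrix_vector_right_distrib matrix_vector_mult_scaleR)
      hence "y - Phi *v (x + \<gamma> *\<^sub>R (s - x)) = - (\<gamma> *\<^sub>R (Phi *v v))" using r0 by simp
      moreover have "(norm (y - Phi *v (x + \<gamma> *\<^sub>R (s - x))))\<^sup>2 \<le> (norm (y - Phi *v (x + 0 *\<^sub>R (s - x))))\<^sup>2"
        using ls[rule_format, of 0] by simp
      ultimately have "(norm (\<gamma> *\<^sub>R (Phi *v v)))\<^sup>2 \<le> 0" using r0 by simp
      hence Pv: "Phi *v v = 0" using g0 by simp
      have xi: "x$i = 0" using supp_zero[OF sk iL] .
      have vi: "\<bar>v$i\<bar> = beta" using sg b unfolding v_def sdef by (auto simp: xi axis_def)
      have sv: "supp v \<subseteq> insert i L" using sk unfolding supp_def v_def sdef by (auto simp: axis_def)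
      obtain j1 where j1: "\<forall>j. \<bar>v$j\<bar> \<le> \<bar>v$j1\<bar>" using exmax by blast
      have vj1: "\<bar>v$j1\<bar> \<ge> beta" using j1 vi by metis
      hence "j1 \<in> insert i L" using supp_zero[OF sv, of j1] b by force
      from lower[OF u sv j1 this]
      have "\<bar>v$j1\<bar> * (1 - (real (card (insert i L)) - 1) * ?mu) \<le> 0" using Pv by simp
      moreover have "real (card (insert i L)) - 1 = real (card L)" using iL by simp
      ultimately have "\<bar>v$j1\<bar> * (1 - real (card L) * ?mu) \<le> 0" by simp
      moreover have "\<bar>v$j1\<bar> * (1 - real (card L) * ?mu) > 0" using vj1 b h2 by simp
      ultimately show False by simp
    qed
  qed
  show ?thesis
  proof
    fix j assume "j \<in> supp x'"
    hence ne: "x'$j \<noteq> 0" unfolding supp_def by simp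
    show "j \<in> L"
    proof (rule ccontr)
      assume jL: "j \<notin> L"
      have "x$j = 0" using supp_zero[OF sk jL] .
      moreover have "\<gamma> * (s$j) = 0" using key jL unfolding sdef by (auto simp: axis_def)
      ultimately have "x'$j = 0" unfolding x' by (simp add: algebra_simps)
      thus False using ne by simp
    qed
  qed
qed


lemma sign_lemma:
  assumes "\<sigma> \<in> {-1, 1::real}" "t > 0 \<longrightarrow> \<sigma> = 1" "t < 0 \<longrightarrow> \<sigma> = -1"
  shows "\<sigma> * t = \<bar>t\<bar>"
  using assms by (cases "t > 0"; cases "t < 0") auto

lemma norm_sq_expand:
  fixes r w :: "'a::real_inner"
  shows "(norm (r - g *\<^sub>R w))\<^sup>2 = (norm r)\<^sup>2 - 2 * g * inner r w + g\<^sup>2 * (norm w)\<^sup>2"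
  unfolding power2_norm_eq_inner
  by (simp add: inner_diff_left inner_diff_right inner_commute algebra_simps power2_eq_square)

lemma mono_step:
  fixes Phi :: "real^'n^'d"
  assumes st: "fw_step Phi y beta x x'"
  shows "norm (y - Phi *v x') \<le> norm (y - Phi *v x)"
proof -
  obtain i \<sigma> \<gamma> s where mx: "\<forall>j. \<bar>inner (column j Phi) (y - Phi *v x)\<bar> \<le> \<bar>inner (column i Phi) (y - Phi *v x)\<bar>"
    and sg: "\<sigma> \<in> {-1, 1}" 
    and sg1: "inner (column i Phi) (y - Phi *v x) > 0 \<longrightarrow> \<sigma> = 1"
    and sg2: "inner (column i Phi) (y - Phi *v x) < 0 \<longrightarrow> \<sigma> = -1"
    and sdef: "s = (\<sigma> * beta) *\<^sub>R axis i 1" and ga: "\<gamma> \<in> {0..1}"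
    and ls: "\<forall>g\<in>{0..1}. (norm (y - Phi *v (x + \<gamma> *\<^sub>R (s - x))))\<^sup>2
                        \<le> (norm (y - Phi *v (x + g *\<^sub>R (s - x))))\<^sup>2"
    and x': "x' = x + \<gamma> *\<^sub>R (s - x)"
    by (rule unpack[OF st])
  have h: "(norm (y - Phi *v (x + \<gamma> *\<^sub>R (s - x))))\<^sup>2 \<le> (norm (y - Phi *v (x + 0 *\<^sub>R (s - x))))\<^sup>2"
    by (rule bspec[OF ls]) simp
  have "x + 0 *\<^sub>R (s - x) = x" by simp
  with h have "(norm (y - Phi *v x'))\<^sup>2 \<le> (norm (y - Phi *v x))\<^sup>2" unfolding x' by simp
  thus ?thesis by (rule power2_le_imp_le) simp
qed

lemma descent:
  fixes Phi :: "real^'n^'d"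
  assumes u: "unit_columns Phi"
    and y: "y = Phi *v xstar" and l1: "l1norm xstar \<le> beta"
    and b: "beta > 0" and st: "fw_step Phi y beta x x'"
    and nr: "norm (y - Phi *v x) \<le> norm y"
    and g: "g \<in> {0..1}"
  shows "(norm (y - Phi *v x'))\<^sup>2 \<le> (norm (y - Phi *v x))\<^sup>2 - 2 * g * (norm (y - Phi *v x))\<^sup>2
            + g\<^sup>2 * (beta + 2 * norm y)\<^sup>2"
proof -
  obtain i \<sigma> \<gamma> s where mx: "\<forall>j. \<bar>inner (column j Phi) (y - Phi *v x)\<bar> \<le> \<bar>inner (column i Phi) (y - Phi *v x)\<bar>"
    and sg: "\<sigma> \<in> {-1, 1}" 
    and sg1: "inner (column i Phi) (y - Phi *v x) > 0 \<longrightarrow> \<sigma> = 1"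
    and sg2: "inner (column i Phi) (y - Phi *v x) < 0 \<longrightarrow> \<sigma> = -1"
    and sdef: "s = (\<sigma> * beta) *\<^sub>R axis i 1" and ga: "\<gamma> \<in> {0..1}"
    and ls: "\<forall>g\<in>{0..1}. (norm (y - Phi *v (x + \<gamma> *\<^sub>R (s - x))))\<^sup>2
                        \<le> (norm (y - Phi *v (x + g *\<^sub>R (s - x))))\<^sup>2"
    and x': "x' = x + \<gamma> *\<^sub>R (s - x)"
    by (rule unpack[OF st])
  define r where "r = y - Phi *v x"
  define w where "w = Phi *v (s - x)"
  define c where "c = \<bar>inner (column i Phi) r\<bar>"
  have e1: "y - Phi *v (x + g *\<^sub>R (s - x)) = r - g *\<^sub>R w"
    unfolding r_def w_def by (simp add: matrix_vector_right_distrib matrix_vector_mult_scaleR)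
  have Ps: "Phi *v s = (\<sigma> * beta) *\<^sub>R column i Phi"
    unfolding sdef by (simp add: matrix_vector_mult_scaleR matrix_vector_mult_basis)
  have sig: "\<sigma> * inner (column i Phi) r = c"
    unfolding c_def r_def by (rule sign_lemma[OF sg sg1 sg2])
  have rs: "inner r (Phi *v s) = beta * c"
    using sig unfolding Ps by (simp add: inner_commute algebra_simps)
  have "inner r y = (\<Sum>j\<in>UNIV. xstar$j * inner (column j Phi) r)"
    unfolding y by (simp add: matrix_mult_sum scalar_mult_eq_scaleR inner_sum_right inner_commute)
  also have "\<dots> \<le> (\<Sum>j\<in>UNIV. \<bar>xstar$j\<bar> * c)"
  proof (rule sum_mono)
    fix j
    have "xstar$j * inner (column j Phi) r \<le> \<bar>xstar$j\<bar> * \<bar>inner (column j Phi) r\<bar>"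
      by (metis abs_ge_self abs_mult)
    also have "\<dots> \<le> \<bar>xstar$j\<bar> * c" unfolding c_def r_def using mx by (simp add: mult_left_mono)
    finally show "xstar$j * inner (column j Phi) r \<le> \<bar>xstar$j\<bar> * c" .
  qed
  also have "\<dots> = l1norm xstar * c" unfolding l1norm_def by (simp add: sum_distrib_right)
  also have "\<dots> \<le> beta * c" using l1 by (simp add: c_def mult_right_mono)
  finally have ry: "inner r y \<le> beta * c" .
  have rw: "inner r w \<ge> (norm r)\<^sup>2"
  proof -
    have "inner r w = inner r (Phi *v s) - inner r (Phi *v x)"
      unfolding w_def by (simp add: matrix_vector_mult_diff_distrib inner_diff_right)
    also have "Phi *v x = y - r" unfolding r_def by simp
    finally have "inner r w = beta * c - inner r y + inner r r" using rs by (simp add: inner_diff_right)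
    thus ?thesis using ry by (simp add: power2_norm_eq_inner)
  qed
  have nPs: "norm (Phi *v s) = beta"
    unfolding Ps using sg b u unfolding unit_columns_def by auto
  have "norm w \<le> norm (Phi *v s) + norm (Phi *v x)"
    unfolding w_def by (simp add: matrix_vector_mult_diff_distrib norm_triangle_ineq4)
  also have "norm (Phi *v x) \<le> norm y + norm r"
    unfolding r_def by (metis add.commute diff_add_cancel norm_triangle_ineq4 diff_diff_eq2 norm_minus_commute) 
  finally have "norm w \<le> beta + 2 * norm y" using nPs nr unfolding r_def by simp
  hence nw: "(norm w)\<^sup>2 \<le> (beta + 2 * norm y)\<^sup>2" by (simp add: power_mono)
  have "(norm (y - Phi *v x'))\<^sup>2 \<le> (norm (r - g *\<^sub>R w))\<^sup>2"
    using ls g unfolding x' e1[symmetric] by blast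
  also have "\<dots> = (norm r)\<^sup>2 - 2 * g * inner r w + g\<^sup>2 * (norm w)\<^sup>2" by (rule norm_sq_expand)
  also have "\<dots> \<le> (norm r)\<^sup>2 - 2 * g * (norm r)\<^sup>2 + g\<^sup>2 * (beta + 2 * norm y)\<^sup>2"
  proof -
    have "2 * g * (norm r)\<^sup>2 \<le> 2 * g * inner r w" using rw g by (simp add: mult_left_mono)
    moreover have "g\<^sup>2 * (norm w)\<^sup>2 \<le> g\<^sup>2 * (beta + 2 * norm y)\<^sup>2" using nw by (simp add: mult_left_mono)
    ultimately show ?thesis by linarith
  qed
  finally show ?thesis unfolding r_def .
qed


lemma coord_bound:
  fixes Phi :: "real^'n^'d"
  assumes u: "unit_columns Phi" and s: "supp z \<subseteq> S"
    and c: "c = 1 - (real (card S) - 1) * coherence Phi" and cpos: "c > 0"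
  shows "\<bar>z$j\<bar> * c \<le> norm (Phi *v z)"
proof -
  obtain j0 where j0: "\<forall>j. \<bar>z$j\<bar> \<le> \<bar>z$j0\<bar>" using exmax by blast
  show ?thesis
  proof (cases "j0 \<in> S")
    case True
    have "\<bar>z$j\<bar> * c \<le> \<bar>z$j0\<bar> * c" using j0 cpos by (simp add: mult_right_mono)
    also have "\<dots> \<le> \<bar>inner (column j0 Phi) (Phi *v z)\<bar>" unfolding c by (rule lower[OF u s j0 True])
    also have "\<dots> \<le> norm (column j0 Phi) * norm (Phi *v z)" by (rule Cauchy_Schwarz_ineq2)
    also have "\<dots> = norm (Phi *v z)" using u unfolding unit_columns_def by simp
    finally show ?thesis .
  next
    case False
    hence "z$j0 = 0" by (rule supp_zero[OF s])
    hence "z$j = 0" using j0[rule_format, of j] by simp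
    thus ?thesis by simp
  qed
qed

theorem corollary1:
  fixes Phi :: "real^'n^'d" and xstar :: "real^'n" and y :: "real^'d"
    and m :: nat and beta :: real and xs :: "nat \<Rightarrow> real^'n"
  assumes "unit_columns Phi"
    and "m \<ge> 1"
    and "(2 * real m - 1) * coherence Phi < 1"
    and "y = Phi *v xstar"
    and "card (supp xstar) \<le> m"
    and "beta > 0"
    and "l1norm xstar \<le> beta"
    and "fw_iterates Phi y beta xs"
  shows "xs \<longlonglongrightarrow> xstar"
proof -
  note u = assms(1) and y = assms(4) and b = assms(6) and l1 = assms(7)
  define L where "L = supp xstar"
  define mu where "mu = coherence Phi"
  have mu0: "mu \<ge> 0" unfolding mu_def by (rule coh_ge0)
  have LM: "real (card L) \<le> real m" using assms(5) unfolding L_def by simp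
  have h1: "(2 * real (card L) - 1) * mu < 1"
  proof -
    have "(2 * real (card L) - 1) * mu \<le> (2 * real m - 1) * mu" using LM mu0 by (simp add: mult_right_mono)
    thus ?thesis using assms(3) unfolding mu_def by simp
  qed
  have h2: "real (card L) * mu < 1"
  proof -
    have "real (card L) * mu \<le> (2 * real m - 1) * mu" using LM mu0 assms(2) by (simp add: mult_right_mono)
    thus ?thesis using assms(3) unfolding mu_def by simp
  qed
  define c where "c = 1 - (real (card L) - 1) * mu"
  have cpos: "c > 0"
  proof -
    have "(real (card L) - 1) * mu \<le> real (card L) * mu" using mu0 by (simp add: mult_right_mono)
    thus ?thesis unfolding c_def using h2 by simp
  qed
  have x0: "xs 0 = 0" and st: "\<And>k. fw_step Phi y beta (xs k) (xs (Suc k))"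
    using assms(8) unfolding fw_iterates_def by auto
  have sk: "supp (xs k) \<subseteq> L" for k
  proof (induction k)
    case 0 show ?case unfolding x0 supp_def by simp
  next
    case (Suc k)
    show ?case by (rule supp_step[OF u h1[unfolded mu_def] h2[unfolded mu_def] y _ Suc b st]) (simp add: L_def)
  qed
  define E where "E k = (norm (y - Phi *v xs k))\<^sup>2" for k
  have nmono: "norm (y - Phi *v xs (Suc k)) \<le> norm (y - Phi *v xs k)" for k
    by (rule mono_step[OF st])
  have ny: "norm (y - Phi *v xs k) \<le> norm y" for k
  proof (induction k)
    case 0 show ?case by (simp add: x0)
  next
    case (Suc k) thus ?case using nmono[of k] by linarith
  qed
  have Emono: "E (Suc k) \<le> E k" for k unfolding E_def using nmono[of k] by (simp add: power_mono)
  have E0: "E k \<ge> 0" for k unfolding E_def by simp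
  define D where "D = (beta + 2 * norm y)\<^sup>2"
  have "beta + 2 * norm y > 0" using b norm_ge_zero[of y] by linarith
  hence Dpos: "D > 0" unfolding D_def by simp
  have desc: "g \<in> {0..1} \<Longrightarrow> E (Suc k) \<le> E k - 2 * g * E k + g\<^sup>2 * D" for g k
    unfolding E_def D_def by (rule descent[OF u y l1 b st ny])
  have small: "\<exists>N. E N < e" if e: "e > 0" for e
  proof (rule ccontr)
    assume "\<not> (\<exists>N. E N < e)"
    hence ge: "E k \<ge> e" for k by (simp add: not_less)
    define g where "g = min 1 (e / D)"
    have g0: "g > 0" unfolding g_def using e Dpos by simp
    have g1: "g \<le> 1" unfolding g_def by simp
    have "g \<le> e / D" unfolding g_def by simp
    hence gD: "g * D \<le> e" using Dpos by (simp add: pos_le_divide_eq)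
    have dec: "E (Suc k) \<le> E k - g * e" for k
    proof -
      have "E (Suc k) \<le> E k - 2 * g * E k + g\<^sup>2 * D" using desc[of g k] g0 g1 by simp
      also have "g\<^sup>2 * D = g * (g * D)" by (simp add: power2_eq_square)
      also have "\<dots> \<le> g * E k" using gD ge[of k] g0 by (simp add: mult_left_mono)
      finally have "E (Suc k) \<le> E k - g * E k" by simp
      moreover have "g * e \<le> g * E k" using ge[of k] g0 by (simp add: mult_left_mono)
      ultimately show ?thesis by simp
    qed
    have ind: "E k \<le> E 0 - real k * (g * e)" for k
    proof (induction k)
      case 0 show ?case by simp
    next
      case (Suc k) thus ?case using dec[of k] by (simp add: algebra_simps)
    qed
    obtain k where "real k * (g * e) > E 0" using reals_Archimedean3[of "g * e"] g0 e by auto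
    with ind[of k] E0[of k] show False by simp
  qed
  have Edec: "E k \<le> E N" if "N \<le> k" for N k
    using that
  proof (induction k)
    case 0 thus ?case by simp
  next
    case (Suc k) thus ?case using Emono[of k] by (cases "N = Suc k") (auto simp: le_Suc_eq)
  qed
  have cb: "\<bar>(xstar - xs k)$j\<bar> * c \<le> norm (y - Phi *v xs k)" for k j
  proof -
    have sz: "supp (xstar - xs k) \<subseteq> L"
    proof
      fix j assume "j \<in> supp (xstar - xs k)"
      hence "xstar$j \<noteq> 0 \<or> xs k $j \<noteq> 0" unfolding supp_def by auto
      thus "j \<in> L" using sk[of k] unfolding supp_def L_def by auto
    qed
    have "Phi *v (xstar - xs k) = y - Phi *v xs k" unfolding y by (simp add: matrix_vector_mult_diff_distrib)
    moreover have "\<bar>(xstar - xs k)$j\<bar> * c \<le> norm (Phi *v (xstar - xs k))"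
      by (rule coord_bound[OF u sz c_def[unfolded mu_def] cpos])
    ultimately show ?thesis by simp
  qed
  show ?thesis unfolding LIMSEQ_iff
  proof (intro allI impI)
    fix e :: real assume e: "e > 0"
    define n where "n = real CARD('n)"
    have npos: "n > 0" unfolding n_def by simp
    define d where "d = e * c / n"
    have dpos: "d > 0" unfolding d_def using e cpos npos by simp
    obtain N where N: "E N < d\<^sup>2" using small[of "d\<^sup>2"] dpos by auto
    show "\<exists>no. \<forall>k\<ge>no. norm (xs k - xstar) < e"
    proof (intro exI allI impI)
      fix k assume "N \<le> k"
      hence "E k < d\<^sup>2" using Edec N by (meson le_less_trans)
      hence nr: "norm (y - Phi *v xs k) < d" unfolding E_def using dpos
        by (simp add: power_less_imp_less_base)
      have "norm (xs k - xstar) \<le> (\<Sum>j\<in>UNIV. \<bar>(xs k - xstar)$j\<bar>)" by (rule norm_le_l1_cart)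
      also have "\<dots> \<le> (\<Sum>j\<in>(UNIV::'n set). norm (y - Phi *v xs k) / c)"
      proof (rule sum_mono)
        fix j
        have "\<bar>(xs k - xstar)$j\<bar> = \<bar>(xstar - xs k)$j\<bar>" by simp
        thus "\<bar>(xs k - xstar)$j\<bar> \<le> norm (y - Phi *v xs k) / c"
          using cb[of k j] cpos by (simp add: pos_le_divide_eq)
      qed
      also have "\<dots> = n * (norm (y - Phi *v xs k) / c)" unfolding n_def by simp
      also have "\<dots> < n * (d / c)" using nr cpos npos by (simp add: divide_strict_right_mono)
      also have "\<dots> = e" unfolding d_def using npos cpos by simp
      finally show "norm (xs k - xstar) < e" .
    qed
  qed
qed

end
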